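(* Let $\Omega$ be a compact subset of a Euclidean space and let $\phi$ satisfy condition (A1) below. Then for every $\mu\in M(\Omega)$, \[ \phi\big(\|\mu\|_{M(\Omega)}\big)\le\Phi(\mu)\le\|\mu\|_{M(\Omega)}. \]
   Context: $M(\Omega)$ is the space of signed Borel measures on $\Omega$ of bounded total variation, with total variation norm $\|\mu\|_{M(\Omega)}$ and total variation measure $|\mu|$. With $\operatorname{atom}(\mu)=\{\omega:\mu(\{\omega\})\ne0\}$, $\Phi(\mu)=|\mu|(\Omega\setminus\operatorname{atom}(\mu))+\sum_{\omega\in\operatorname{atom}(\mu)}\phi(|\mu|(\{\omega\}))$. Condition (A1): $\phi\colon[0,\infty)\to[0,\infty)$ is differentiable, concave, nondecreasing, $\phi(0)=0$, $\phi'(0)=1$, $\phi(z)\to+\infty$ as $z\to\infty$, and there is $\gamma\ge0$ with $0\le\phi'(z_1)-\phi'(z_2)\le\gamma(z_2-z_1)$ for all $0\le z_1\le z_2$. *)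

theory Defs
  imports "HOL-Analysis.Analysis"
begin

definition borel_on :: "'a::euclidean_space set \<Rightarrow> 'a set set" where
  "borel_on \<Omega> = {A. A \<in> sets borel \<and> A \<subseteq> \<Omega>}"

text \<open>A (real-valued, hence finite) signed Borel measure on \<Omega>: a countably additive
  set function on the Borel subsets of \<Omega>.  Only its values on borel_on \<Omega> matter.\<close>
definition signed_measure_on :: "'a::euclidean_space set \<Rightarrow> ('a set \<Rightarrow> real) \<Rightarrow> bool" where
  "signed_measure_on \<Omega> \<mu> \<longleftrightarrow>
     \<mu> {} = 0 \<and>
     (\<forall>A::nat \<Rightarrow> 'a set. range A \<subseteq> borel_on \<Omega> \<and> disjoint_family A \<longrightarrow>
        (\<lambda>i. \<mu> (A i)) sums \<mu> (\<Union>i. A i))"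

definition tv_partition_sums :: "'a::euclidean_space set \<Rightarrow> ('a set \<Rightarrow> real) \<Rightarrow> 'a set \<Rightarrow> real set" where
  "tv_partition_sums \<Omega> \<mu> E =
     {\<Sum>B\<in>P. \<bar>\<mu> B\<bar> | P. finite P \<and> disjoint P \<and> P \<subseteq> borel_on \<Omega> \<and> \<Union>P = E}"

definition total_variation :: "'a::euclidean_space set \<Rightarrow> ('a set \<Rightarrow> real) \<Rightarrow> 'a set \<Rightarrow> real" where
  "total_variation \<Omega> \<mu> E = Sup (tv_partition_sums \<Omega> \<mu> E)"

definition measures_M :: "'a::euclidean_space set \<Rightarrow> ('a set \<Rightarrow> real) set" where
  "measures_M \<Omega> = {\<mu>. signed_measure_on \<Omega> \<mu> \<and> bdd_above (tv_partition_sums \<Omega> \<mu> \<Omega>)}"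

definition M_norm :: "'a::euclidean_space set \<Rightarrow> ('a set \<Rightarrow> real) \<Rightarrow> real" where
  "M_norm \<Omega> \<mu> = total_variation \<Omega> \<mu> \<Omega>"

definition atoms :: "'a::euclidean_space set \<Rightarrow> ('a set \<Rightarrow> real) \<Rightarrow> 'a set" where
  "atoms \<Omega> \<mu> = {\<omega> \<in> \<Omega>. \<mu> {\<omega>} \<noteq> 0}"

definition Phi :: "(real \<Rightarrow> real) \<Rightarrow> 'a::euclidean_space set \<Rightarrow> ('a set \<Rightarrow> real) \<Rightarrow> real" where
  "Phi \<phi> \<Omega> \<mu> =
     total_variation \<Omega> \<mu> (\<Omega> - atoms \<Omega> \<mu>)
     + (\<Sum>\<^sub>\<infinity>\<omega>\<in>atoms \<Omega> \<mu>. \<phi> (total_variation \<Omega> \<mu> {\<omega>}))"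

definition cond_A1 :: "(real \<Rightarrow> real) \<Rightarrow> bool" where
  "cond_A1 \<phi> \<longleftrightarrow>
     (\<exists>\<phi>' \<gamma>. (\<forall>z\<ge>0. (\<phi> has_real_derivative \<phi>' z) (at z within {0..}))
        \<and> \<phi>' 0 = 1 \<and> \<gamma> \<ge> 0
        \<and> (\<forall>z1 z2. 0 \<le> z1 \<and> z1 \<le> z2 \<longrightarrow>
              0 \<le> \<phi>' z1 - \<phi>' z2 \<and> \<phi>' z1 - \<phi>' z2 \<le> \<gamma> * (z2 - z1)))
     \<and> (\<forall>z\<ge>0. \<phi> z \<ge> 0)
     \<and> concave_on {0..} \<phi>
     \<and> mono_on {0..} \<phi>
     \<and> \<phi> 0 = 0
     \<and> filterlim \<phi> at_top at_top"

end

theory Submission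
  imports Defs
begin

lemma borel_onI: "A \<in> sets borel \<Longrightarrow> A \<subseteq> \<Omega> \<Longrightarrow> A \<in> borel_on \<Omega>"
  by (simp add: borel_on_def)

lemma countable_borel_on: "countable C \<Longrightarrow> C \<subseteq> \<Omega> \<Longrightarrow> C \<in> borel_on \<Omega>"
  unfolding borel_on_def by (auto intro: sets.countable)

lemma part_union:
  fixes \<mu> :: "'a set \<Rightarrow> real"
  assumes "finite P" "finite Q" "disjoint P" "disjoint Q" "\<Union>P \<inter> \<Union>Q = {}" "\<mu> {} = 0"
  shows "disjoint (P \<union> Q) \<and> (\<Sum>B\<in>P \<union> Q. \<bar>\<mu> B\<bar>) = (\<Sum>B\<in>P. \<bar>\<mu> B\<bar>) + (\<Sum>B\<in>Q. \<bar>\<mu> B\<bar>)"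
proof
  show "disjoint (P \<union> Q)"
    using assms(3,4,5) unfolding pairwise_def disjnt_def by blast
  have sub: "P \<inter> Q \<subseteq> {{}}" using assms(5) by blast
  have "(\<Sum>B\<in>P \<inter> Q. \<bar>\<mu> B\<bar>) = 0"
    by (rule sum.neutral) (use sub assms(6) in auto)
  then show "(\<Sum>B\<in>P \<union> Q. \<bar>\<mu> B\<bar>) = (\<Sum>B\<in>P. \<bar>\<mu> B\<bar>) + (\<Sum>B\<in>Q. \<bar>\<mu> B\<bar>)"
    using sum_Un[OF assms(1,2), of "\<lambda>B. \<bar>\<mu> B\<bar>"] by simp
qed

lemma fin_add:
  assumes sm: "signed_measure_on \<Omega> \<mu>" and B: "B \<in> borel_on \<Omega>" and C: "C \<in> borel_on \<Omega>"
    and disj: "B \<inter> C = {}"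
  shows "\<mu> (B \<union> C) = \<mu> B + \<mu> C"
proof -
  define S where "S = (\<lambda>i::nat. if i = 0 then B else if i = 1 then C else {})"
  have e: "{} \<in> borel_on \<Omega>" by (simp add: borel_on_def)
  have "range S \<subseteq> borel_on \<Omega>" using B C e by (auto simp: S_def)
  moreover have "disjoint_family S"
    unfolding disjoint_family_on_def S_def using disj by auto
  ultimately have s1: "(\<lambda>i. \<mu> (S i)) sums \<mu> (\<Union>i. S i)"
    using sm unfolding signed_measure_on_def by blast
  have U: "(\<Union>i. S i) = B \<union> C"
  proof
    show "(\<Union>i. S i) \<subseteq> B \<union> C" by (auto simp: S_def split: if_splits)
    show "B \<union> C \<subseteq> (\<Union>i. S i)"
    proof -
      have "S 0 = B" "S 1 = C" by (auto simp: S_def)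
      then show ?thesis by (metis UN_upper Un_least UNIV_I)
    qed
  qed
  have "(\<lambda>i. \<mu> (S i)) sums (\<Sum>i\<in>{0,1}. \<mu> (S i))"
    by (rule sums_finite) (use sm in \<open>auto simp: S_def signed_measure_on_def\<close>)
  then have "\<mu> (B \<union> C) = (\<Sum>i\<in>{0,1}. \<mu> (S i))" using s1 U sums_unique2 by metis
  then show ?thesis by (simp add: S_def)
qed

lemma count_sing:
  assumes sm: "signed_measure_on \<Omega> \<mu>" and C: "countable C" "C \<subseteq> \<Omega>"
    and summ: "(\<lambda>\<omega>. \<bar>\<mu> {\<omega>}\<bar>) summable_on C"
  shows "\<bar>\<mu> C\<bar> \<le> infsum (\<lambda>\<omega>. \<bar>\<mu> {\<omega>}\<bar>) C"
proof (cases "finite C")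
  case True
  have "\<bar>\<mu> C\<bar> \<le> (\<Sum>\<omega>\<in>C. \<bar>\<mu> {\<omega>}\<bar>)"
    using True C(2)
  proof (induction C rule: finite_induct)
    case empty
    then show ?case using sm by (simp add: signed_measure_on_def)
  next
    case (insert x F)
    have "\<mu> (insert x F) = \<mu> ({x} \<union> F)" by simp
    also have "\<dots> = \<mu> {x} + \<mu> F"
    proof (rule fin_add[OF sm])
      show "{x} \<in> borel_on \<Omega>" using insert.prems by (intro countable_borel_on) auto
      show "F \<in> borel_on \<Omega>" using insert.prems insert.hyps by (intro countable_borel_on countable_finite) auto
      show "{x} \<inter> F = {}" using insert.hyps by auto
    qed
    finally show ?case using insert by simp
  qed
  then show ?thesis using True by simp
next
  case False
  define e where "e = from_nat_into C"
  have bij: "bij_betw e UNIV C" unfolding e_def using bij_betw_from_nat_into C(1) False by blast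
  define S where "S = (\<lambda>i. {e i})"
  have "range S \<subseteq> borel_on \<Omega>"
    using bij C(2) by (auto simp: S_def bij_betw_def intro!: countable_borel_on)
  moreover have "disjoint_family S"
    using bij unfolding disjoint_family_on_def S_def bij_betw_def inj_on_def by auto
  ultimately have s1: "(\<lambda>i. \<mu> (S i)) sums \<mu> (\<Union>i. S i)"
    using sm unfolding signed_measure_on_def by blast
  have U: "(\<Union>i. S i) = C" using bij by (auto simp: S_def bij_betw_def)
  have sum1: "(\<lambda>i. \<bar>\<mu> {e i}\<bar>) summable_on UNIV"
    using summable_on_reindex_bij_betw[OF bij, of "\<lambda>\<omega>. \<bar>\<mu> {\<omega>}\<bar>"] summ by simp
  then have sum2: "summable (\<lambda>i. \<bar>\<mu> {e i}\<bar>)"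
    by (subst summable_on_UNIV_nonneg_real_iff[symmetric]) auto
  have "infsum (\<lambda>i. \<bar>\<mu> {e i}\<bar>) UNIV = infsum (\<lambda>\<omega>. \<bar>\<mu> {\<omega>}\<bar>) C"
    by (rule infsum_reindex_bij_betw[OF bij])
  moreover have "(\<lambda>i. \<bar>\<mu> {e i}\<bar>) sums infsum (\<lambda>i. \<bar>\<mu> {e i}\<bar>) UNIV"
    using has_sum_imp_sums[OF has_sum_infsum[OF sum1]] .
  ultimately have eq: "(\<Sum>i. \<bar>\<mu> {e i}\<bar>) = infsum (\<lambda>\<omega>. \<bar>\<mu> {\<omega>}\<bar>) C"
    using sums_unique by metis
  have "\<mu> C = (\<Sum>i. \<mu> {e i})" using s1 U sums_unique unfolding S_def by metis
  then show ?thesis using summable_rabs[OF sum2] eq by simp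
qed



lemma tv_basic:
  assumes M: "\<mu> \<in> measures_M \<Omega>" and Ob: "\<Omega> \<in> sets borel" and E: "E \<in> borel_on \<Omega>"
  shows "bdd_above (tv_partition_sums \<Omega> \<mu> E)" "tv_partition_sums \<Omega> \<mu> E \<noteq> {}"
    "\<bar>\<mu> E\<bar> \<in> tv_partition_sums \<Omega> \<mu> E"
proof -
  have sm: "signed_measure_on \<Omega> \<mu>" and bd: "bdd_above (tv_partition_sums \<Omega> \<mu> \<Omega>)"
    using M by (auto simp: measures_M_def)
  have e0: "\<mu> {} = 0" using sm by (simp add: signed_measure_on_def)
  obtain K where K: "\<And>y. y \<in> tv_partition_sums \<Omega> \<mu> \<Omega> \<Longrightarrow> y \<le> K"
    using bd unfolding bdd_above_def by blast
  have EO: "\<Omega> - E \<in> borel_on \<Omega>" "E \<subseteq> \<Omega>" using E Ob by (auto simp: borel_on_def)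
  show "bdd_above (tv_partition_sums \<Omega> \<mu> E)"
    unfolding bdd_above_def
  proof (intro exI ballI)
    fix y assume "y \<in> tv_partition_sums \<Omega> \<mu> E"
    then obtain P where P: "finite P" "disjoint P" "P \<subseteq> borel_on \<Omega>" "\<Union>P = E"
      and y: "y = (\<Sum>B\<in>P. \<bar>\<mu> B\<bar>)"
      unfolding tv_partition_sums_def by blast
    have pu: "disjoint (P \<union> {\<Omega> - E}) \<and> (\<Sum>B\<in>P \<union> {\<Omega> - E}. \<bar>\<mu> B\<bar>) = (\<Sum>B\<in>P. \<bar>\<mu> B\<bar>) + (\<Sum>B\<in>{\<Omega> - E}. \<bar>\<mu> B\<bar>)"
      by (rule part_union) (use P e0 in auto)
    have "(\<Sum>B\<in>P \<union> {\<Omega> - E}. \<bar>\<mu> B\<bar>) \<in> tv_partition_sums \<Omega> \<mu> \<Omega>"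
      unfolding tv_partition_sums_def using pu P EO by blast
    then have "(\<Sum>B\<in>P \<union> {\<Omega> - E}. \<bar>\<mu> B\<bar>) \<le> K" by (rule K)
    then show "y \<le> K" using pu y by simp
  qed
  have "disjoint {E}" by simp
  then show "\<bar>\<mu> E\<bar> \<in> tv_partition_sums \<Omega> \<mu> E"
    unfolding tv_partition_sums_def using E by (auto intro!: exI[of _ "{E}"])
  then show "tv_partition_sums \<Omega> \<mu> E \<noteq> {}" by blast
qed

lemma tv_ge:
  assumes M: "\<mu> \<in> measures_M \<Omega>" and Ob: "\<Omega> \<in> sets borel" and E: "E \<in> borel_on \<Omega>"
    and P: "finite P" "disjoint P" "P \<subseteq> borel_on \<Omega>" "\<Union>P = E"
  shows "(\<Sum>B\<in>P. \<bar>\<mu> B\<bar>) \<le> total_variation \<Omega> \<mu> E"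
  unfolding total_variation_def
  by (rule cSup_upper) (use tv_basic[OF M Ob E] P in \<open>auto simp: tv_partition_sums_def\<close>)

lemma tv_abs:
  assumes M: "\<mu> \<in> measures_M \<Omega>" and Ob: "\<Omega> \<in> sets borel" and E: "E \<in> borel_on \<Omega>"
  shows "\<bar>\<mu> E\<bar> \<le> total_variation \<Omega> \<mu> E" "0 \<le> total_variation \<Omega> \<mu> E"
proof -
  show "\<bar>\<mu> E\<bar> \<le> total_variation \<Omega> \<mu> E"
    unfolding total_variation_def by (rule cSup_upper) (use tv_basic[OF M Ob E] in auto)
  then show "0 \<le> total_variation \<Omega> \<mu> E" by linarith
qed

lemma tv_superadd:
  assumes M: "\<mu> \<in> measures_M \<Omega>" and Ob: "\<Omega> \<in> sets borel"
    and E1: "E1 \<in> borel_on \<Omega>" and E2: "E2 \<in> borel_on \<Omega>" and disj: "E1 \<inter> E2 = {}"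
  shows "total_variation \<Omega> \<mu> E1 + total_variation \<Omega> \<mu> E2 \<le> total_variation \<Omega> \<mu> (E1 \<union> E2)"
proof -
  have e0: "\<mu> {} = 0" using M by (simp add: measures_M_def signed_measure_on_def)
  have E12: "E1 \<union> E2 \<in> borel_on \<Omega>" using E1 E2 by (auto simp: borel_on_def)
  have key: "(\<Sum>B\<in>P1. \<bar>\<mu> B\<bar>) + (\<Sum>B\<in>P2. \<bar>\<mu> B\<bar>) \<le> total_variation \<Omega> \<mu> (E1 \<union> E2)"
    if P1: "finite P1" "disjoint P1" "P1 \<subseteq> borel_on \<Omega>" "\<Union>P1 = E1"
    and P2: "finite P2" "disjoint P2" "P2 \<subseteq> borel_on \<Omega>" "\<Union>P2 = E2" for P1 P2
  proof -
    have pu: "disjoint (P1 \<union> P2) \<and> (\<Sum>B\<in>P1 \<union> P2. \<bar>\<mu> B\<bar>) = (\<Sum>B\<in>P1. \<bar>\<mu> B\<bar>) + (\<Sum>B\<in>P2. \<bar>\<mu> B\<bar>)"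
      by (rule part_union) (use P1 P2 e0 disj in auto)
    have "(\<Sum>B\<in>P1 \<union> P2. \<bar>\<mu> B\<bar>) \<le> total_variation \<Omega> \<mu> (E1 \<union> E2)"
      by (rule tv_ge[OF M Ob E12]) (use pu P1 P2 in auto)
    then show ?thesis using pu by simp
  qed
  have "total_variation \<Omega> \<mu> E1 \<le> total_variation \<Omega> \<mu> (E1 \<union> E2) - total_variation \<Omega> \<mu> E2"
    unfolding total_variation_def[of _ _ E1]
  proof (rule cSup_least)
    show "tv_partition_sums \<Omega> \<mu> E1 \<noteq> {}" using tv_basic[OF M Ob E1] by auto
    fix x assume "x \<in> tv_partition_sums \<Omega> \<mu> E1"
    then obtain P1 where P1: "finite P1" "disjoint P1" "P1 \<subseteq> borel_on \<Omega>" "\<Union>P1 = E1"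
      and x: "x = (\<Sum>B\<in>P1. \<bar>\<mu> B\<bar>)" unfolding tv_partition_sums_def by blast
    have "total_variation \<Omega> \<mu> E2 \<le> total_variation \<Omega> \<mu> (E1 \<union> E2) - x"
      unfolding total_variation_def[of _ _ E2]
    proof (rule cSup_least)
      show "tv_partition_sums \<Omega> \<mu> E2 \<noteq> {}" using tv_basic[OF M Ob E2] by auto
      fix y assume "y \<in> tv_partition_sums \<Omega> \<mu> E2"
      then obtain P2 where P2: "finite P2" "disjoint P2" "P2 \<subseteq> borel_on \<Omega>" "\<Union>P2 = E2"
        and y: "y = (\<Sum>B\<in>P2. \<bar>\<mu> B\<bar>)" unfolding tv_partition_sums_def by blast
      show "y \<le> total_variation \<Omega> \<mu> (E1 \<union> E2) - x" using key[OF P1 P2] x y by simp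
    qed
    then show "x \<le> total_variation \<Omega> \<mu> (E1 \<union> E2) - total_variation \<Omega> \<mu> E2" by simp
  qed
  then show ?thesis by simp
qed

lemma tv_fin_sing:
  assumes M: "\<mu> \<in> measures_M \<Omega>" and Ob: "\<Omega> \<in> sets borel" and E: "E \<in> borel_on \<Omega>"
    and F: "finite F" "F \<subseteq> E"
  shows "(\<Sum>\<omega>\<in>F. \<bar>\<mu> {\<omega>}\<bar>) \<le> total_variation \<Omega> \<mu> E"
proof -
  have e0: "\<mu> {} = 0" using M by (simp add: measures_M_def signed_measure_on_def)
  have EO: "E \<subseteq> \<Omega>" "E \<in> sets borel" using E by (auto simp: borel_on_def)
  define P where "P = (\<lambda>\<omega>. {\<omega>}) ` F"
  have dP: "disjoint P" unfolding P_def pairwise_def disjnt_def by auto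
  have pu: "disjoint (P \<union> {E - F}) \<and> (\<Sum>B\<in>P \<union> {E - F}. \<bar>\<mu> B\<bar>) = (\<Sum>B\<in>P. \<bar>\<mu> B\<bar>) + (\<Sum>B\<in>{E - F}. \<bar>\<mu> B\<bar>)"
    by (rule part_union) (use F dP e0 in \<open>auto simp: P_def\<close>)
  have "P \<subseteq> borel_on \<Omega>" using F EO by (auto simp: P_def borel_on_def)
  moreover have "E - F \<in> borel_on \<Omega>"
  proof -
    have "F \<in> borel_on \<Omega>" using F EO by (intro countable_borel_on countable_finite) auto
    then show ?thesis using EO by (auto simp: borel_on_def)
  qed
  moreover have "\<Union>(P \<union> {E - F}) = E" using F by (auto simp: P_def)
  ultimately have "(\<Sum>B\<in>P \<union> {E - F}. \<bar>\<mu> B\<bar>) \<le> total_variation \<Omega> \<mu> E"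
    using tv_ge[OF M Ob E, of "P \<union> {E - F}"] pu F by (auto simp: P_def)
  moreover have "(\<Sum>B\<in>P. \<bar>\<mu> B\<bar>) = (\<Sum>\<omega>\<in>F. \<bar>\<mu> {\<omega>}\<bar>)"
    unfolding P_def by (subst sum.reindex) (auto simp: inj_on_def)
  ultimately show ?thesis using pu by simp
qed

lemma tv_sing:
  assumes M: "\<mu> \<in> measures_M \<Omega>" and w: "\<omega> \<in> \<Omega>"
  shows "total_variation \<Omega> \<mu> {\<omega>} = \<bar>\<mu> {\<omega>}\<bar>"
proof -
  have e0: "\<mu> {} = 0" using M by (simp add: measures_M_def signed_measure_on_def)
  have "tv_partition_sums \<Omega> \<mu> {\<omega>} = {\<bar>\<mu> {\<omega>}\<bar>}"
  proof
    show "{\<bar>\<mu> {\<omega>}\<bar>} \<subseteq> tv_partition_sums \<Omega> \<mu> {\<omega>}"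
      unfolding tv_partition_sums_def using w by (auto simp: borel_on_def intro!: exI[of _ "{{\<omega>}}"])
    show "tv_partition_sums \<Omega> \<mu> {\<omega>} \<subseteq> {\<bar>\<mu> {\<omega>}\<bar>}"
    proof
      fix y assume "y \<in> tv_partition_sums \<Omega> \<mu> {\<omega>}"
      then obtain P where P: "finite P" "\<Union>P = {\<omega>}"
        and y: "y = (\<Sum>B\<in>P. \<bar>\<mu> B\<bar>)" unfolding tv_partition_sums_def by blast
      have "P = {{\<omega>}} \<or> P = {{}, {\<omega>}}"
      proof -
        have "P \<subseteq> {{}, {\<omega>}}"
        proof
          fix B assume "B \<in> P"
          then have "B \<subseteq> {\<omega>}" using P(2) by blast
          then show "B \<in> {{}, {\<omega>}}" using subset_singleton_iff by auto
        qed
        moreover have "{\<omega>} \<in> P"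
        proof -
          obtain B where "B \<in> P" "\<omega> \<in> B" using P(2) by blast
          moreover have "B \<in> {{}, {\<omega>}}" using calculation(1) \<open>P \<subseteq> {{}, {\<omega>}}\<close> by blast
          ultimately show ?thesis by auto
        qed
        ultimately show ?thesis by blast
      qed
      then show "y \<in> {\<bar>\<mu> {\<omega>}\<bar>}" using y e0 by auto
    qed
  qed
  then show ?thesis unfolding total_variation_def by simp
qed


lemma atoms_countable:
  assumes M: "\<mu> \<in> measures_M \<Omega>" and Ob: "\<Omega> \<in> sets borel"
  shows "countable (atoms \<Omega> \<mu>)"
proof -
  define K where "K = total_variation \<Omega> \<mu> \<Omega>"
  have OO: "\<Omega> \<in> borel_on \<Omega>" using Ob by (simp add: borel_on_def)
  define G where "G = (\<lambda>n::nat. {\<omega> \<in> \<Omega>. inverse (real (Suc n)) \<le> \<bar>\<mu> {\<omega>}\<bar>})"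
  have fin: "finite (G n)" for n
  proof -
    have "finite (G n) \<and> card (G n) \<le> nat \<lceil>K * real (Suc n)\<rceil>"
    proof (rule finite_if_finite_subsets_card_bdd)
      fix H assume H: "H \<subseteq> G n" "finite H"
      have "real (card H) * inverse (real (Suc n)) = (\<Sum>\<omega>\<in>H. inverse (real (Suc n)))" by simp
      also have "\<dots> \<le> (\<Sum>\<omega>\<in>H. \<bar>\<mu> {\<omega>}\<bar>)" by (rule sum_mono) (use H in \<open>auto simp: G_def\<close>)
      also have "\<dots> \<le> K" unfolding K_def by (rule tv_fin_sing[OF M Ob OO H(2)]) (use H in \<open>auto simp: G_def\<close>)
      finally have "real (card H) * inverse (real (Suc n)) \<le> K" .
      then have "real (card H) \<le> K * real (Suc n)" by (simp add: field_simps)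
      then show "card H \<le> nat \<lceil>K * real (Suc n)\<rceil>" by linarith
    qed
    then show ?thesis by blast
  qed
  have "atoms \<Omega> \<mu> \<subseteq> (\<Union>n. G n)"
  proof
    fix \<omega> assume "\<omega> \<in> atoms \<Omega> \<mu>"
    then have w: "\<omega> \<in> \<Omega>" "0 < \<bar>\<mu> {\<omega>}\<bar>" by (auto simp: atoms_def)
    then obtain n where "inverse (real (Suc n)) < \<bar>\<mu> {\<omega>}\<bar>" using reals_Archimedean[OF w(2)] by blast
    then show "\<omega> \<in> (\<Union>n. G n)" using w by (auto simp: G_def intro!: exI[of _ n])
  qed
  moreover have "countable (\<Union>n. G n)" using fin by (intro countable_UN) (auto intro: countable_finite)
  ultimately show ?thesis by (rule countable_subset)
qed

lemma sing_summable:
  assumes M: "\<mu> \<in> measures_M \<Omega>" and Ob: "\<Omega> \<in> sets borel" and E: "E \<in> borel_on \<Omega>"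
  shows "(\<lambda>\<omega>. \<bar>\<mu> {\<omega>}\<bar>) summable_on E"
    "infsum (\<lambda>\<omega>. \<bar>\<mu> {\<omega>}\<bar>) E \<le> total_variation \<Omega> \<mu> E"
proof -
  show S: "(\<lambda>\<omega>. \<bar>\<mu> {\<omega>}\<bar>) summable_on E"
    by (rule nonneg_bdd_above_summable_on)
       (auto simp: bdd_above_def intro!: exI[of _ "total_variation \<Omega> \<mu> E"] tv_fin_sing[OF M Ob E])
  show "infsum (\<lambda>\<omega>. \<bar>\<mu> {\<omega>}\<bar>) E \<le> total_variation \<Omega> \<mu> E"
    by (rule infsum_le_finite_sums[OF S]) (rule tv_fin_sing[OF M Ob E])
qed

lemma main_le:
  assumes M: "\<mu> \<in> measures_M \<Omega>" and Ob: "\<Omega> \<in> sets borel"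
  defines "A \<equiv> atoms \<Omega> \<mu>"
  shows "total_variation \<Omega> \<mu> \<Omega> \<le> total_variation \<Omega> \<mu> (\<Omega> - A) + infsum (\<lambda>\<omega>. \<bar>\<mu> {\<omega>}\<bar>) A"
proof -
  have sm: "signed_measure_on \<Omega> \<mu>" using M by (simp add: measures_M_def)
  have e0: "\<mu> {} = 0" using sm by (simp add: signed_measure_on_def)
  have OO: "\<Omega> \<in> borel_on \<Omega>" using Ob by (simp add: borel_on_def)
  have cA: "countable A" unfolding A_def by (rule atoms_countable[OF M Ob])
  have AO: "A \<subseteq> \<Omega>" by (auto simp: A_def atoms_def)
  have Ab: "A \<in> borel_on \<Omega>" by (rule countable_borel_on[OF cA AO])
  have OAb: "\<Omega> - A \<in> borel_on \<Omega>" using Ab Ob by (auto simp: borel_on_def)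
  have sA: "(\<lambda>\<omega>. \<bar>\<mu> {\<omega>}\<bar>) summable_on A" by (rule sing_summable[OF M Ob Ab])
  show ?thesis
    unfolding total_variation_def[of _ _ \<Omega>]
  proof (rule cSup_least)
    show "tv_partition_sums \<Omega> \<mu> \<Omega> \<noteq> {}" using tv_basic[OF M Ob OO] by auto
    fix x assume "x \<in> tv_partition_sums \<Omega> \<mu> \<Omega>"
    then obtain P where P: "finite P" "disjoint P" "P \<subseteq> borel_on \<Omega>" "\<Union>P = \<Omega>"
      and x: "x = (\<Sum>B\<in>P. \<bar>\<mu> B\<bar>)" unfolding tv_partition_sums_def by blast
    have each: "\<bar>\<mu> B\<bar> \<le> \<bar>\<mu> (B - A)\<bar> + infsum (\<lambda>\<omega>. \<bar>\<mu> {\<omega>}\<bar>) (B \<inter> A)" if B: "B \<in> P" for B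
    proof -
      have Bb: "B \<in> borel_on \<Omega>" using B P(3) by blast
      have b1: "B - A \<in> borel_on \<Omega>" using Bb Ab by (auto simp: borel_on_def)
      have cBA: "countable (B \<inter> A)" using cA by (rule countable_subset[rotated]) auto
      have b2: "B \<inter> A \<in> borel_on \<Omega>" by (rule countable_borel_on[OF cBA]) (use AO in auto)
      have "\<mu> B = \<mu> ((B - A) \<union> (B \<inter> A))" by (simp add: Un_Diff_Int)
      also have "\<dots> = \<mu> (B - A) + \<mu> (B \<inter> A)" by (rule fin_add[OF sm b1 b2]) auto
      finally have "\<bar>\<mu> B\<bar> \<le> \<bar>\<mu> (B - A)\<bar> + \<bar>\<mu> (B \<inter> A)\<bar>" by simp
      moreover have "\<bar>\<mu> (B \<inter> A)\<bar> \<le> infsum (\<lambda>\<omega>. \<bar>\<mu> {\<omega>}\<bar>) (B \<inter> A)"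
        by (rule count_sing[OF sm cBA]) (use AO in auto, rule summable_on_subset[OF sA], auto)
      ultimately show ?thesis by simp
    qed
    have "x \<le> (\<Sum>B\<in>P. \<bar>\<mu> (B - A)\<bar> + infsum (\<lambda>\<omega>. \<bar>\<mu> {\<omega>}\<bar>) (B \<inter> A))"
      unfolding x by (rule sum_mono) (rule each)
    also have "\<dots> = (\<Sum>B\<in>P. \<bar>\<mu> (B - A)\<bar>) + (\<Sum>B\<in>P. infsum (\<lambda>\<omega>. \<bar>\<mu> {\<omega>}\<bar>) (B \<inter> A))"
      by (rule sum.distrib)
    also have "(\<Sum>B\<in>P. infsum (\<lambda>\<omega>. \<bar>\<mu> {\<omega>}\<bar>) (B \<inter> A)) = infsum (\<lambda>\<omega>. \<bar>\<mu> {\<omega>}\<bar>) (\<Union>B\<in>P. B \<inter> A)"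
    proof (rule sum_infsum[OF P(1)])
      show "(\<lambda>\<omega>. \<bar>\<mu> {\<omega>}\<bar>) summable_on (B \<inter> A)" if "B \<in> P" for B
        by (rule summable_on_subset[OF sA]) auto
      show "(B \<inter> A) \<inter> (B' \<inter> A) = {}" if "B \<in> P" "B' \<in> P" "B \<noteq> B'" for B B'
        using P(2) that unfolding pairwise_def disjnt_def by blast
    qed
    also have "(\<Union>B\<in>P. B \<inter> A) = A" using P(4) AO by blast
    also have "(\<Sum>B\<in>P. \<bar>\<mu> (B - A)\<bar>) = (\<Sum>C\<in>(\<lambda>B. B - A) ` P. \<bar>\<mu> C\<bar>)"
    proof -
      have "(\<Sum>C\<in>(\<lambda>B. B - A) ` P. \<bar>\<mu> C\<bar>) = sum ((\<lambda>C. \<bar>\<mu> C\<bar>) \<circ> (\<lambda>B. B - A)) P"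
      proof (rule sum.reindex_nontrivial[OF P(1)])
        fix B B' assume "B \<in> P" "B' \<in> P" "B \<noteq> B'" "B - A = B' - A"
        then have "B - A = {}" using P(2) unfolding pairwise_def disjnt_def by blast
        then show "\<bar>\<mu> (B - A)\<bar> = 0" using e0 by (metis abs_zero)
      qed
      then show ?thesis by (simp add: o_def)
    qed
    also have "\<dots> \<le> total_variation \<Omega> \<mu> (\<Omega> - A)"
    proof (rule tv_ge[OF M Ob OAb])
      show "finite ((\<lambda>B. B - A) ` P)" using P(1) by simp
      show "disjoint ((\<lambda>B. B - A) ` P)"
        using P(2) unfolding pairwise_def disjnt_def by blast
      show "(\<lambda>B. B - A) ` P \<subseteq> borel_on \<Omega>"
        using P(3) Ab by (auto simp: borel_on_def)
      show "\<Union>((\<lambda>B. B - A) ` P) = \<Omega> - A" using P(4) by blast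
    qed
    finally show "x \<le> total_variation \<Omega> \<mu> (\<Omega> - A) + infsum (\<lambda>\<omega>. \<bar>\<mu> {\<omega>}\<bar>) A" by simp
  qed
qed


lemma phi_lip:
  assumes A1: "cond_A1 \<phi>" and x: "0 \<le> x" and d: "0 \<le> d"
  shows "\<phi> (x + d) \<le> \<phi> x + d"
proof -
  obtain \<phi>' \<gamma> where D0: "\<forall>z\<ge>0. (\<phi> has_real_derivative \<phi>' z) (at z within {0..})"
    and p0: "\<phi>' 0 = 1" and g0: "(\<gamma>::real) \<ge> 0"
    and mon0: "\<forall>z1 z2. 0 \<le> z1 \<and> z1 \<le> z2 \<longrightarrow>
              0 \<le> \<phi>' z1 - \<phi>' z2 \<and> \<phi>' z1 - \<phi>' z2 \<le> \<gamma> * (z2 - z1)"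
    using A1[unfolded cond_A1_def, THEN conjunct1] by blast
  have D: "(\<phi> has_real_derivative \<phi>' z) (at z within {0..})" if "z \<ge> 0" for z
    using D0 that by blast
  have mon: "0 \<le> \<phi>' z1 - \<phi>' z2" if "0 \<le> z1" "z1 \<le> z2" for z1 z2
    using mon0 that by blast
  have le1: "\<phi>' z \<le> 1" if "z \<ge> 0" for z using mon[of 0 z] that p0 by simp
  have "\<exists>z\<in>{x..x+d}. \<phi> (x + d) - \<phi> x = (\<lambda>h. \<phi>' z * h) (x + d - x)"
  proof (rule mvt_very_simple)
    show "x \<le> x + d" using d by simp
    fix z assume z: "x \<le> z" "z \<le> x + d"
    have "(\<phi> has_real_derivative \<phi>' z) (at z within {x..x+d})"
      by (rule DERIV_subset[OF D]) (use z x in auto)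
    then show "(\<phi> has_derivative (\<lambda>h. \<phi>' z * h)) (at z within {x..x+d})"
      by (simp add: has_field_derivative_def)
  qed
  then obtain z where z: "z \<in> {x..x+d}" "\<phi> (x + d) - \<phi> x = \<phi>' z * d" by auto
  have "\<phi>' z * d \<le> 1 * d" by (rule mult_right_mono) (use le1[of z] z x d in auto)
  then show ?thesis using z by simp
qed

lemma phi_subadd:
  assumes A1: "cond_A1 \<phi>" and x: "0 \<le> x" and y: "0 \<le> y"
  shows "\<phi> (x + y) \<le> \<phi> x + \<phi> y"
proof (cases "x + y = 0")
  case True
  then have "x = 0" "y = 0" using x y by auto
  then show ?thesis using A1 by (simp add: cond_A1_def)
next
  case False
  then have s: "x + y > 0" using x y by simp
  have cv: "concave_on {0..} \<phi>" and z0: "\<phi> 0 = 0" using A1 by (auto simp: cond_A1_def)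
  have k: "\<phi> u \<ge> u / (x + y) * \<phi> (x + y)" if u: "0 \<le> u" "u \<le> x + y" for u
  proof -
    have "\<phi> ((1 - u / (x + y)) *\<^sub>R 0 + (u / (x + y)) *\<^sub>R (x + y)) \<ge> (1 - u / (x + y)) * \<phi> 0 + (u / (x + y)) * \<phi> (x + y)"
      by (rule concave_onD[OF cv]) (use u s in auto)
    then show ?thesis using s z0 by simp
  qed
  have "\<phi> x + \<phi> y \<ge> x / (x + y) * \<phi> (x + y) + y / (x + y) * \<phi> (x + y)"
    using k[of x] k[of y] x y by simp
  also have "x / (x + y) * \<phi> (x + y) + y / (x + y) * \<phi> (x + y) = (x + y) / (x + y) * \<phi> (x + y)"
    by (simp only: add_divide_distrib distrib_right)
  also have "\<dots> = \<phi> (x + y)" using s by simp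
  finally show ?thesis .
qed

lemma phi_sum:
  assumes A1: "cond_A1 \<phi>" and a: "0 \<le> a" and F: "finite F" and b: "\<And>w. w \<in> F \<Longrightarrow> 0 \<le> b w"
  shows "\<phi> (a + sum b F) \<le> \<phi> a + (\<Sum>w\<in>F. \<phi> (b w))"
  using F b
proof (induction F rule: finite_induct)
  case empty
  then show ?case by simp
next
  case (insert w F)
  have nn: "0 \<le> sum b F" using insert.prems by (intro sum_nonneg) auto
  have IH: "\<phi> (a + sum b F) \<le> \<phi> a + (\<Sum>w\<in>F. \<phi> (b w))" using insert.IH insert.prems by auto
  have e1: "sum b (insert w F) = b w + sum b F" using insert.hyps by simp
  have e2: "(\<Sum>w\<in>insert w F. \<phi> (b w)) = \<phi> (b w) + (\<Sum>w\<in>F. \<phi> (b w))" using insert.hyps by simp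
  have "\<phi> (a + sum b (insert w F)) = \<phi> ((a + sum b F) + b w)" unfolding e1 by (simp add: algebra_simps)
  also have "\<dots> \<le> \<phi> (a + sum b F) + \<phi> (b w)"
    by (rule phi_subadd[OF A1]) (use a nn insert.prems in auto)
  finally show ?case using IH e2 by linarith
qed


theorem lemmaA2:
  fixes \<Omega> :: "'a::euclidean_space set" and \<phi> :: "real \<Rightarrow> real" and \<mu> :: "'a set \<Rightarrow> real"
  assumes "compact \<Omega>"
    and "cond_A1 \<phi>"
    and "\<mu> \<in> measures_M \<Omega>"
  shows "\<phi> (M_norm \<Omega> \<mu>) \<le> Phi \<phi> \<Omega> \<mu> \<and> Phi \<phi> \<Omega> \<mu> \<le> M_norm \<Omega> \<mu>"
proof -
  note A1 = assms(2) and M = assms(3)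
  have Ob: "\<Omega> \<in> sets borel" using assms(1) by (intro borel_closed compact_imp_closed)
  define A where "A = atoms \<Omega> \<mu>"
  define b where "b = (\<lambda>\<omega>. \<bar>\<mu> {\<omega>}\<bar>)"
  define a where "a = total_variation \<Omega> \<mu> (\<Omega> - A)"
  define N where "N = total_variation \<Omega> \<mu> \<Omega>"
  have cA: "countable A" unfolding A_def by (rule atoms_countable[OF M Ob])
  have AO: "A \<subseteq> \<Omega>" by (auto simp: A_def atoms_def)
  have Ab: "A \<in> borel_on \<Omega>" by (rule countable_borel_on[OF cA AO])
  have OAb: "\<Omega> - A \<in> borel_on \<Omega>" using Ab Ob by (auto simp: borel_on_def)
  have sA: "b summable_on A" unfolding b_def by (rule sing_summable[OF M Ob Ab])
  have SA: "infsum b A \<le> total_variation \<Omega> \<mu> A" unfolding b_def by (rule sing_summable[OF M Ob Ab])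
  have bnn: "0 \<le> b w" for w by (simp add: b_def)
  have phinn: "\<And>z. z \<ge> 0 \<Longrightarrow> \<phi> z \<ge> 0" and mo: "mono_on {0..} \<phi>"
    using A1 by (auto simp: cond_A1_def)
  have phile: "\<phi> u \<le> u" if "0 \<le> u" for u
  proof -
    have "\<phi> (0 + u) \<le> \<phi> 0 + u" by (rule phi_lip[OF A1]) (use that in auto)
    moreover have "\<phi> 0 = 0" using A1 by (simp add: cond_A1_def)
    ultimately show ?thesis by simp
  qed
  have PhiEq: "Phi \<phi> \<Omega> \<mu> = a + infsum (\<lambda>w. \<phi> (b w)) A"
    unfolding Phi_def a_def A_def[symmetric]
  proof -
    have "infsum (\<lambda>w. \<phi> (total_variation \<Omega> \<mu> {w})) A = infsum (\<lambda>w. \<phi> (b w)) A"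
      by (rule infsum_cong) (use AO in \<open>auto simp: b_def tv_sing[OF M]\<close>)
    then show "total_variation \<Omega> \<mu> (\<Omega> - A) + infsum (\<lambda>w. \<phi> (total_variation \<Omega> \<mu> {w})) A =
      total_variation \<Omega> \<mu> (\<Omega> - A) + infsum (\<lambda>w. \<phi> (b w)) A" by simp
  qed
  have sphi: "(\<lambda>w. \<phi> (b w)) summable_on A"
  proof (rule nonneg_bdd_above_summable_on)
    show "0 \<le> \<phi> (b w)" if "w \<in> A" for w using phinn bnn by blast
    show "bdd_above (sum (\<lambda>w. \<phi> (b w)) ` {F. F \<subseteq> A \<and> finite F})"
      unfolding bdd_above_def
    proof (intro exI ballI)
      fix y assume "y \<in> sum (\<lambda>w. \<phi> (b w)) ` {F. F \<subseteq> A \<and> finite F}"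
      then obtain F where F: "F \<subseteq> A" "finite F" and y: "y = sum (\<lambda>w. \<phi> (b w)) F" by blast
      have "y \<le> sum b F" unfolding y by (rule sum_mono) (use phile bnn in blast)
      also have "\<dots> \<le> total_variation \<Omega> \<mu> A" unfolding b_def by (rule tv_fin_sing[OF M Ob Ab F(2,1)])
      finally show "y \<le> total_variation \<Omega> \<mu> A" .
    qed
  qed
  have SphiS: "infsum (\<lambda>w. \<phi> (b w)) A \<le> infsum b A"
    by (rule infsum_mono[OF sphi sA]) (use phile bnn in blast)
  have a0: "0 \<le> a" unfolding a_def by (rule tv_abs(2)[OF M Ob OAb])
  have upper: "Phi \<phi> \<Omega> \<mu> \<le> M_norm \<Omega> \<mu>"
  proof -
    have "Phi \<phi> \<Omega> \<mu> \<le> a + total_variation \<Omega> \<mu> A" using PhiEq SphiS SA by simp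
    also have "\<dots> \<le> total_variation \<Omega> \<mu> ((\<Omega> - A) \<union> A)"
      unfolding a_def by (rule tv_superadd[OF M Ob OAb Ab]) auto
    also have "(\<Omega> - A) \<union> A = \<Omega>" using AO by blast
    finally show ?thesis by (simp add: M_norm_def)
  qed
  have NS: "N \<le> a + infsum b A" unfolding N_def a_def b_def A_def by (rule main_le[OF M Ob])
  have N0: "0 \<le> N" unfolding N_def by (rule tv_abs(2)[OF M Ob]) (use Ob in \<open>simp add: borel_on_def\<close>)
  have S0: "0 \<le> infsum b A" by (rule infsum_nonneg) (rule bnn)
  have "\<phi> N \<le> \<phi> (a + infsum b A)" by (rule mono_onD[OF mo]) (use NS N0 a0 S0 in auto)
  also have "\<phi> (a + infsum b A) \<le> a + infsum (\<lambda>w. \<phi> (b w)) A"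
  proof (rule field_le_epsilon)
    fix e :: real assume e: "0 < e"
    obtain F where F: "finite F" "F \<subseteq> A" "dist (sum b F) (infsum b A) \<le> e"
      using infsum_finite_approximation[OF sA e] by blast
    have le: "sum b F \<le> infsum b A" by (rule finite_sum_le_infsum[OF sA F(1,2)]) (rule bnn)
    then have d: "infsum b A - sum b F \<le> e" using F(3) by (simp add: dist_real_def)
    have sF: "0 \<le> sum b F" by (rule sum_nonneg) (rule bnn)
    have "\<phi> (a + infsum b A) = \<phi> ((a + sum b F) + (infsum b A - sum b F))" by simp
    also have "\<dots> \<le> \<phi> (a + sum b F) + (infsum b A - sum b F)"
      by (rule phi_lip[OF A1]) (use a0 sF le in auto)
    also have "\<phi> (a + sum b F) \<le> \<phi> a + (\<Sum>w\<in>F. \<phi> (b w))"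
      by (rule phi_sum[OF A1 a0 F(1)]) (rule bnn)
    also have "(\<Sum>w\<in>F. \<phi> (b w)) \<le> infsum (\<lambda>w. \<phi> (b w)) A"
      by (rule finite_sum_le_infsum[OF sphi F(1,2)]) (use phinn bnn in blast)
    also have "\<phi> a \<le> a" by (rule phile[OF a0])
    finally show "\<phi> (a + infsum b A) \<le> a + infsum (\<lambda>w. \<phi> (b w)) A + e" using d by linarith
  qed
  finally have lower: "\<phi> (M_norm \<Omega> \<mu>) \<le> Phi \<phi> \<Omega> \<mu>" using PhiEq by (simp add: M_norm_def N_def)
  show ?thesis using lower upper by blast
qed

end
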